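(* Let $\mathcal C'\subseteq\{0,1\}^n$ be a neural code, $c\in\{0,1\}^n$, and $CF(J_{\mathcal C'})=\{f_1,\dots,f_r\}$. Let $M=\{f\in CF(J_{\mathcal C'}) : f(c)=0\}$ and $N=CF(J_{\mathcal C'})\setminus M$. Let $L$ be the set of all products $g=f\cdot(x_i-c_i)$ with $f\in N$ and $i\in[n]$ such that (a) the polynomial $x_i-c_i-1$ does not divide $f$, and (b) $g$ is not a multiple (in $\mathbb F_2[x_1,\dots,x_n]$) of any element of $M$. Then $CF(J_{\mathcal C'\cup\{c\}})=M\cup L$.
   Context: All polynomials lie in $\mathbb F_2[x_1,\dots,x_n]$ (so $x_i-c_i$ is $x_i$ if $c_i=0$ and $1-x_i$ if $c_i=1$). A pseudo-monomial is a polynomial $\prod_{i\in\sigma}x_i\prod_{j\in\tau}(1-x_j)$ with $\sigma\cap\tau=\emptyset$. For $v\in\{0,1\}^n$ let $\rho_v=\prod_{v_i=1}x_i\prod_{v_j=0}(1-x_j)$. For a code $\mathcal C\subseteq\{0,1\}^n$, the neural ideal is $J_\mathcal C=\langle\rho_v : v\in\{0,1\}^n\setminus\mathcal C\rangle$. A pseudo-monomial $f\in J_\mathcal C$ is minimal if there is no pseudo-monomial $g\in J_\mathcal C$ of smaller degree with $f=gh$ for some polynomial $h$; the canonical form $CF(J_\mathcal C)$ is the set of all minimal pseudo-monomials in $J_\mathcal C$. *)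

theory Defs
  imports "HOL-Library.Poly_Mapping" "HOL-Library.Z2"
begin

(* F_2[x_1,...,x_n] is the subring of polynomials using only variables with index < n
   (variable x_(i+1) of the paper is Var i here). *)
type_synonym poly = "(nat \<Rightarrow>\<^sub>0 nat) \<Rightarrow>\<^sub>0 bit"

definition Var :: "nat \<Rightarrow> poly" where
  "Var i = Poly_Mapping.single (Poly_Mapping.single i 1) 1"

definition in_ring :: "nat \<Rightarrow> poly \<Rightarrow> bool" where
  "in_ring n p \<longleftrightarrow> (\<forall>m\<in>Poly_Mapping.keys p. Poly_Mapping.keys m \<subseteq> {..<n})"

definition pdvd :: "nat \<Rightarrow> poly \<Rightarrow> poly \<Rightarrow> bool" where
  "pdvd n f g \<longleftrightarrow> (\<exists>h. in_ring n h \<and> g = f * h)"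

definition total_degree :: "poly \<Rightarrow> nat" where
  "total_degree p = Max (insert 0 ((\<lambda>m. sum (Poly_Mapping.lookup m) (Poly_Mapping.keys m)) ` Poly_Mapping.keys p))"

definition pseudo_monomial :: "nat \<Rightarrow> poly \<Rightarrow> bool" where
  "pseudo_monomial n f \<longleftrightarrow> (\<exists>\<sigma> \<tau>. \<sigma> \<subseteq> {..<n} \<and> \<tau> \<subseteq> {..<n} \<and> \<sigma> \<inter> \<tau> = {} \<and>
      f = (\<Prod>i\<in>\<sigma>. Var i) * (\<Prod>j\<in>\<tau>. 1 - Var j))"

definition words :: "nat \<Rightarrow> bool list set" where
  "words n = {v. length v = n}"

definition rho :: "bool list \<Rightarrow> poly" where
  "rho v = (\<Prod>i\<in>{i. i < length v \<and> v ! i}. Var i) * (\<Prod>j\<in>{j. j < length v \<and> \<not> v ! j}. 1 - Var j)"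

definition ideal_gen :: "nat \<Rightarrow> poly set \<Rightarrow> poly set" where
  "ideal_gen n G = {p. \<exists>h. (\<forall>g\<in>G. in_ring n (h g)) \<and> p = (\<Sum>g\<in>G. h g * g)}"

definition neural_ideal :: "nat \<Rightarrow> bool list set \<Rightarrow> poly set" where
  "neural_ideal n C = ideal_gen n (rho ` (words n - C))"

definition minimal_pm :: "nat \<Rightarrow> poly set \<Rightarrow> poly \<Rightarrow> bool" where
  "minimal_pm n J f \<longleftrightarrow> pseudo_monomial n f \<and> f \<in> J \<and>
     \<not> (\<exists>g h. pseudo_monomial n g \<and> g \<in> J \<and> in_ring n h \<and>
            total_degree g < total_degree f \<and> f = g * h)"

definition CF :: "nat \<Rightarrow> poly set \<Rightarrow> poly set" where
  "CF n J = {f. minimal_pm n J f}"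

definition eval :: "poly \<Rightarrow> bool list \<Rightarrow> bit" where
  "eval p v = (\<Sum>m\<in>Poly_Mapping.keys p. Poly_Mapping.lookup p m * (\<Prod>i\<in>Poly_Mapping.keys m. (of_bool (v ! i)) ^ (Poly_Mapping.lookup m i)))"

definition lin :: "nat \<Rightarrow> bool \<Rightarrow> poly" where
  "lin i b = Var i - (if b then 1 else 0)"

end

theory Submission
  imports Defs
begin

declare add_bit_eq_xor[simp del] mult_bit_eq_and[simp del]

lemma bit_add_self [simp]: "(x::bit) + x = 0"
  by (cases x) simp_all

lemma poly_uminus [simp]: "- (p::poly) = p"
  by (rule poly_mapping_eqI) simp

lemma poly_minus: "(p::poly) - q = p + q"
  by (metis diff_conv_add_uminus poly_uminus)

lemma poly_add_self [simp]: "(p::poly) + p = 0"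
  by (rule poly_mapping_eqI) (simp only: lookup_add bit_add_self lookup_zero)

lemma keys_diff_sub: "Poly_Mapping.keys ((p::poly) - q) \<subseteq> Poly_Mapping.keys p \<union> Poly_Mapping.keys q"
  by (simp only: poly_minus keys_add)

lemma in_ring_add: "in_ring n p \<Longrightarrow> in_ring n q \<Longrightarrow> in_ring n (p+q)"
  unfolding in_ring_def by (meson UnE keys_add subsetD)

lemma in_ring_diff: "in_ring n p \<Longrightarrow> in_ring n q \<Longrightarrow> in_ring n (p-q)"
  by (simp only: poly_minus in_ring_add)

lemma in_ring_mult: "in_ring n p \<Longrightarrow> in_ring n q \<Longrightarrow> in_ring n (p*q)"
  unfolding in_ring_def
proof
  fix m assume a: "\<forall>m\<in>Poly_Mapping.keys p. Poly_Mapping.keys m \<subseteq> {..<n}"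
    "\<forall>m\<in>Poly_Mapping.keys q. Poly_Mapping.keys m \<subseteq> {..<n}" and m: "m \<in> Poly_Mapping.keys (p*q)"
  have "m \<in> {a + b | a b. a \<in> Poly_Mapping.keys p \<and> b \<in> Poly_Mapping.keys q}"
    using keys_mult[of p q] m by (rule subsetD)
  then obtain a b where ab: "a \<in> Poly_Mapping.keys p" "b \<in> Poly_Mapping.keys q" "m = a + b"
    by blast
  have "Poly_Mapping.keys a \<subseteq> {..<n}" "Poly_Mapping.keys b \<subseteq> {..<n}" using a ab by auto
  then show "Poly_Mapping.keys m \<subseteq> {..<n}" using keys_add[of a b] ab(3) by auto
qed

lemma in_ring_zero [simp]: "in_ring n 0" by (simp add: in_ring_def)
lemma in_ring_one [simp]: "in_ring n 1" by (simp add: in_ring_def)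
lemma in_ring_Var: "i < n \<Longrightarrow> in_ring n (Var i)" by (simp add: in_ring_def Var_def)

lemma in_ring_prod: "finite A \<Longrightarrow> (\<And>a. a \<in> A \<Longrightarrow> in_ring n (f a)) \<Longrightarrow> in_ring n (\<Prod>a\<in>A. f a)"
  by (induction A rule: finite_induct) (auto intro: in_ring_mult)

lemma in_ring_sum: "finite A \<Longrightarrow> (\<And>a. a \<in> A \<Longrightarrow> in_ring n (f a)) \<Longrightarrow> in_ring n (\<Sum>a\<in>A. f a)"
  by (induction A rule: finite_induct) (auto intro: in_ring_add)

definition mv :: "bool list \<Rightarrow> (nat \<Rightarrow>\<^sub>0 nat) \<Rightarrow> bit" where
  "mv v m = (\<Prod>i\<in>Poly_Mapping.keys m. (of_bool (v ! i)) ^ (Poly_Mapping.lookup m i))"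

lemma eval_mv: "eval p v = (\<Sum>m\<in>Poly_Mapping.keys p. Poly_Mapping.lookup p m * mv v m)"
  by (simp add: eval_def mv_def)

lemma mv_superset: "finite S \<Longrightarrow> Poly_Mapping.keys m \<subseteq> S \<Longrightarrow>
   mv v m = (\<Prod>i\<in>S. (of_bool (v ! i)) ^ (Poly_Mapping.lookup m i))"
  unfolding mv_def by (rule prod.mono_neutral_left) (auto simp: in_keys_iff)

lemma mv_add: "mv v (a + b) = mv v a * mv v b"
proof -
  let ?S = "Poly_Mapping.keys a \<union> Poly_Mapping.keys b"
  have "mv v (a+b) = (\<Prod>i\<in>?S. (of_bool (v ! i)) ^ (Poly_Mapping.lookup (a+b) i))"
    by (rule mv_superset) (auto simp: keys_add)
  also have "\<dots> = (\<Prod>i\<in>?S. (of_bool (v ! i)) ^ (Poly_Mapping.lookup a i) * (of_bool (v ! i)) ^ (Poly_Mapping.lookup b i))"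
    by (simp add: lookup_add power_add del: power_bit_unfold)
  also have "\<dots> = mv v a * mv v b"
    by (simp add: prod.distrib mv_superset[of ?S])
  finally show ?thesis .
qed

lemma eval_superset: "finite S \<Longrightarrow> Poly_Mapping.keys p \<subseteq> S \<Longrightarrow>
   eval p v = (\<Sum>m\<in>S. Poly_Mapping.lookup p m * mv v m)"
  unfolding eval_mv by (rule sum.mono_neutral_left) (auto simp: in_keys_iff)

lemma eval_add: "eval (p + q) v = eval p v + eval q v"
proof -
  let ?S = "Poly_Mapping.keys p \<union> Poly_Mapping.keys q"
  have "eval (p+q) v = (\<Sum>m\<in>?S. Poly_Mapping.lookup (p+q) m * mv v m)"
    by (rule eval_superset) (auto simp: keys_add)
  also have "\<dots> = eval p v + eval q v"
    by (simp add: lookup_add distrib_right sum.distrib eval_superset[of ?S])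
  finally show ?thesis .
qed

lemma eval_zero [simp]: "eval 0 v = 0" by (simp add: eval_def)

lemma eval_single: "eval (Poly_Mapping.single m a) v = a * mv v m"
  by (simp add: eval_mv)

lemma update_eq_add: "a \<notin> Poly_Mapping.keys f \<Longrightarrow> Poly_Mapping.update a b f = f + Poly_Mapping.single a b"
  by (rule poly_mapping_eqI) (auto simp: lookup_update lookup_add lookup_single in_keys_iff when_def)

lemma eval_mult_single: "eval (Poly_Mapping.single a b * q) v = eval (Poly_Mapping.single a b) v * eval q v"
proof (induction q rule: update_induct)
  case const
  then show ?case by simp
next
  case (update f a' b')
  then show ?case
    by (simp add: update_eq_add distrib_left eval_add mult_single eval_single mv_add algebra_simps)
qed

lemma eval_mult: "eval (p * q) v = eval p v * eval q v"
proof (induction p rule: update_induct)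
  case const
  then show ?case by simp
next
  case (update f a b)
  have "eval (Poly_Mapping.update a b f * q) v = eval (f*q) v + eval (Poly_Mapping.single a b * q) v"
    using update(1) by (simp add: update_eq_add distrib_right eval_add)
  also have "\<dots> = (eval f v + eval (Poly_Mapping.single a b) v) * eval q v"
    using update(3) by (simp add: eval_mult_single distrib_right)
  also have "\<dots> = eval (Poly_Mapping.update a b f) v * eval q v"
    using update(1) by (simp add: update_eq_add eval_add)
  finally show ?case .
qed

lemma eval_one [simp]: "eval 1 v = 1"
  by (simp add: eval_mv mv_def)

lemma eval_minus: "eval (p - q) v = eval p v - eval q v"
  by (simp add: poly_minus eval_add)

lemma eval_Var: "eval (Var i) v = of_bool (v ! i)"
  by (simp add: Var_def eval_single mv_def)

lemma eval_prod: "finite A \<Longrightarrow> eval (\<Prod>a\<in>A. f a) v = (\<Prod>a\<in>A. eval (f a) v)"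
  by (induction A rule: finite_induct) (auto simp: eval_mult)

lemma eval_sum: "finite A \<Longrightarrow> eval (\<Sum>a\<in>A. f a) v = (\<Sum>a\<in>A. eval (f a) v)"
  by (induction A rule: finite_induct) (auto simp: eval_add)



definition pm :: "nat set \<Rightarrow> nat set \<Rightarrow> poly" where
  "pm \<sigma> \<tau> = (\<Prod>i\<in>\<sigma>. Var i) * (\<Prod>j\<in>\<tau>. 1 - Var j)"

definition okp :: "nat \<Rightarrow> nat set \<Rightarrow> nat set \<Rightarrow> bool" where
  "okp n \<sigma> \<tau> \<longleftrightarrow> \<sigma> \<subseteq> {..<n} \<and> \<tau> \<subseteq> {..<n} \<and> \<sigma> \<inter> \<tau> = {}"

definition box :: "nat \<Rightarrow> nat set \<Rightarrow> nat set \<Rightarrow> bool list set" where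
  "box n \<sigma> \<tau> = {v \<in> words n. (\<forall>i\<in>\<sigma>. v ! i) \<and> (\<forall>j\<in>\<tau>. \<not> v ! j)}"

definition free :: "nat \<Rightarrow> bool list set \<Rightarrow> nat set \<Rightarrow> nat set \<Rightarrow> bool" where
  "free n C \<sigma> \<tau> \<longleftrightarrow> box n \<sigma> \<tau> \<inter> C = {}"

lemma okp_finite: "okp n \<sigma> \<tau> \<Longrightarrow> finite \<sigma> \<and> finite \<tau>"
  unfolding okp_def using finite_subset by blast

lemma pseudo_monomial_pm: "pseudo_monomial n f \<longleftrightarrow> (\<exists>\<sigma> \<tau>. okp n \<sigma> \<tau> \<and> f = pm \<sigma> \<tau>)"
  unfolding pseudo_monomial_def okp_def pm_def by (simp add: conj_assoc)

lemma prod_of_bool_bit: "finite A \<Longrightarrow> (\<Prod>a\<in>A. (of_bool (P a) :: bit)) = of_bool (\<forall>a\<in>A. P a)"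
  by (induction A rule: finite_induct) auto

lemma one_minus_of_bool: "1 - (of_bool b :: bit) = of_bool (\<not> b)"
  by (cases b) (simp_all)

lemma eval_pm: "finite \<sigma> \<Longrightarrow> finite \<tau> \<Longrightarrow>
  eval (pm \<sigma> \<tau>) v = of_bool ((\<forall>i\<in>\<sigma>. v ! i) \<and> (\<forall>j\<in>\<tau>. \<not> v ! j))"
  by (simp add: pm_def eval_mult eval_prod eval_Var eval_minus one_minus_of_bool prod_of_bool_bit)

lemma rho_pm: "rho w = pm {i. i < length w \<and> w ! i} {j. j < length w \<and> \<not> w ! j}"
  by (simp add: rho_def pm_def)

lemma eval_rho: "eval (rho w) v = of_bool (\<forall>i<length w. v ! i = w ! i)"
  unfolding rho_pm by (subst eval_pm) auto

lemma words_finite: "finite (words n)"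
proof -
  have "words n = {xs. set xs \<subseteq> UNIV \<and> length xs = n}" by (simp add: words_def)
  then show ?thesis using finite_lists_length_eq[of "UNIV :: bool set" n] by simp
qed

lemma eval_rho_other: "w \<in> words n \<Longrightarrow> v \<in> words n \<Longrightarrow> w \<noteq> v \<Longrightarrow> eval (rho w) v = 0"
proof -
  assume a: "w \<in> words n" "v \<in> words n" "w \<noteq> v"
  have "\<not> (\<forall>i<length w. v ! i = w ! i)"
  proof
    assume "\<forall>i<length w. v ! i = w ! i"
    then have "w = v" using a(1,2) unfolding words_def by (auto intro: nth_equalityI)
    then show False using a(3) by simp
  qed
  then show ?thesis by (simp add: eval_rho)
qed

lemma ideal_vanish:
  assumes "p \<in> neural_ideal n C" "v \<in> C" "C \<subseteq> words n"
  shows "eval p v = 0"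
proof -
  let ?G = "rho ` (words n - C)"
  obtain h where p: "p = (\<Sum>g\<in>?G. h g * g)"
    using assms(1) unfolding neural_ideal_def ideal_gen_def by blast
  have fin: "finite ?G" using words_finite by simp
  have "eval p v = (\<Sum>g\<in>?G. eval (h g) v * eval g v)"
    unfolding p by (simp add: eval_sum[OF fin] eval_mult)
  also have "\<dots> = 0"
  proof (rule sum.neutral, rule ballI)
    fix g assume "g \<in> ?G"
    then obtain w where "w \<in> words n" "w \<notin> C" "g = rho w" by blast
    then have "eval g v = 0" using eval_rho_other[of w n v] assms by auto
    then show "eval (h g) v * eval g v = 0" by simp
  qed
  finally show ?thesis .
qed

lemma ideal_add: "p \<in> ideal_gen n G \<Longrightarrow> q \<in> ideal_gen n G \<Longrightarrow> p + q \<in> ideal_gen n G"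
proof -
  assume "p \<in> ideal_gen n G" "q \<in> ideal_gen n G"
  then obtain h1 h2 where h: "\<forall>g\<in>G. in_ring n (h1 g)" "p = (\<Sum>g\<in>G. h1 g * g)"
    "\<forall>g\<in>G. in_ring n (h2 g)" "q = (\<Sum>g\<in>G. h2 g * g)"
    unfolding ideal_gen_def by blast
  have "p + q = (\<Sum>g\<in>G. (h1 g + h2 g) * g)"
    by (simp add: h distrib_right sum.distrib)
  moreover have "\<forall>g\<in>G. in_ring n (h1 g + h2 g)" using h by (simp add: in_ring_add)
  ultimately show ?thesis unfolding ideal_gen_def mem_Collect_eq
    by (intro exI[of _ "\<lambda>g. h1 g + h2 g"]) simp
qed

lemma ideal_gen_in: "finite G \<Longrightarrow> g \<in> G \<Longrightarrow> g \<in> ideal_gen n G"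
proof -
  assume "finite G" "g \<in> G"
  have "(\<Sum>g'\<in>G. (if g' = g then 1 else 0) * g') = (\<Sum>g'\<in>G. if g' = g then g' else 0)"
    by (rule sum.cong) auto
  then have "g = (\<Sum>g'\<in>G. (if g' = g then 1 else 0) * g')"
    using \<open>finite G\<close> \<open>g \<in> G\<close> by (simp add: sum.delta')
  moreover have "\<forall>g'\<in>G. in_ring n (if g' = g then 1 else 0)" by simp
  ultimately show ?thesis unfolding ideal_gen_def mem_Collect_eq
    by (intro exI[of _ "\<lambda>g'. if g' = g then 1 else 0"]) simp
qed

lemma pm_split: "k \<notin> \<sigma> \<Longrightarrow> k \<notin> \<tau> \<Longrightarrow> finite \<sigma> \<Longrightarrow> finite \<tau> \<Longrightarrow>
   pm \<sigma> \<tau> = pm (insert k \<sigma>) \<tau> + pm \<sigma> (insert k \<tau>)"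
proof -
  assume a: "k \<notin> \<sigma>" "k \<notin> \<tau>" "finite \<sigma>" "finite \<tau>"
  have e1: "pm (insert k \<sigma>) \<tau> = Var k * pm \<sigma> \<tau>" using a unfolding pm_def by simp
  have e2: "pm \<sigma> (insert k \<tau>) = (1 - Var k) * pm \<sigma> \<tau>"
    unfolding pm_def prod.insert[OF a(4) a(2)] by (rule mult.left_commute)
  have "pm (insert k \<sigma>) \<tau> + pm \<sigma> (insert k \<tau>) = (Var k + (1 - Var k)) * pm \<sigma> \<tau>"
    unfolding e1 e2 by (simp only: distrib_right)
  also have "\<dots> = pm \<sigma> \<tau>" by (simp only: add_diff_eq add_diff_cancel_left' mult_1)
  finally show ?thesis by (rule sym)
qed

lemma word_exists: "\<exists>v\<in>words n. \<forall>i<n. v ! i = P i"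
  by (rule bexI[of _ "map P [0..<n]"]) (auto simp: words_def)

lemma free_in_ideal:
  assumes "okp n \<sigma> \<tau>" "free n C \<sigma> \<tau>"
  shows "pm \<sigma> \<tau> \<in> neural_ideal n C"
  using assms
proof (induction "card ({..<n} - \<sigma> - \<tau>)" arbitrary: \<sigma> \<tau> rule: less_induct)
  case less
  note fin = okp_finite[OF less.prems(1)]
  show ?case
  proof (cases "{..<n} - \<sigma> - \<tau> = {}")
    case True
    obtain w where w: "w \<in> words n" and wn: "\<forall>i<n. w ! i = (i \<in> \<sigma>)"
      using word_exists[of n "\<lambda>i. i \<in> \<sigma>"] by blast
    have lw: "length w = n" using w by (simp add: words_def)
    have t: "\<forall>j\<in>\<tau>. j<n" "\<forall>i\<in>\<sigma>. i<n" "\<sigma> \<inter> \<tau> = {}" "\<forall>i<n. i \<in> \<sigma> \<or> i \<in> \<tau>"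
      using less.prems(1) True unfolding okp_def by auto
    have "{i. i < length w \<and> w ! i} = \<sigma>" "{j. j < length w \<and> \<not> w ! j} = \<tau>"
      using t wn lw by auto
    then have r: "rho w = pm \<sigma> \<tau>" by (simp add: rho_pm)
    have "w \<in> box n \<sigma> \<tau>" using w t wn unfolding box_def by auto
    then have "w \<notin> C" using less.prems(2) unfolding free_def by blast
    then have "rho w \<in> rho ` (words n - C)" using w by blast
    then show ?thesis unfolding neural_ideal_def r
      by (intro ideal_gen_in) (simp add: words_finite)
  next
    case False
    then obtain k where k: "k < n" "k \<notin> \<sigma>" "k \<notin> \<tau>" by blast
    have o1: "okp n (insert k \<sigma>) \<tau>" "okp n \<sigma> (insert k \<tau>)"
      using less.prems(1) k unfolding okp_def by auto
    have f1: "free n C (insert k \<sigma>) \<tau>" "free n C \<sigma> (insert k \<tau>)"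
      using less.prems(2) unfolding free_def box_def by auto
    have c1: "card ({..<n} - insert k \<sigma> - \<tau>) < card ({..<n} - \<sigma> - \<tau>)"
      "card ({..<n} - \<sigma> - insert k \<tau>) < card ({..<n} - \<sigma> - \<tau>)"
      using k by (intro psubset_card_mono; auto)+
    have h1: "pm (insert k \<sigma>) \<tau> \<in> neural_ideal n C" by (rule less.hyps[OF c1(1) o1(1) f1(1)])
    have h2: "pm \<sigma> (insert k \<tau>) \<in> neural_ideal n C" by (rule less.hyps[OF c1(2) o1(2) f1(2)])
    have e: "pm \<sigma> \<tau> = pm (insert k \<sigma>) \<tau> + pm \<sigma> (insert k \<tau>)"
      using pm_split[OF k(2,3)] fin by blast
    show ?thesis unfolding e neural_ideal_def
      by (rule ideal_add[OF h1[unfolded neural_ideal_def] h2[unfolded neural_ideal_def]])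
  qed
qed

lemma pm_in_ideal_iff:
  assumes "okp n \<sigma> \<tau>" "C \<subseteq> words n"
  shows "pm \<sigma> \<tau> \<in> neural_ideal n C \<longleftrightarrow> free n C \<sigma> \<tau>"
proof
  assume J: "pm \<sigma> \<tau> \<in> neural_ideal n C"
  show "free n C \<sigma> \<tau>" unfolding free_def
  proof (rule ccontr)
    assume "box n \<sigma> \<tau> \<inter> C \<noteq> {}"
    then obtain v where "v \<in> box n \<sigma> \<tau>" "v \<in> C" by blast
    then have "eval (pm \<sigma> \<tau>) v = 1" using okp_finite[OF assms(1)]
      by (simp add: eval_pm box_def)
    moreover have "eval (pm \<sigma> \<tau>) v = 0" using ideal_vanish[OF J \<open>v \<in> C\<close> assms(2)] .
    ultimately show False by simp
  qed
next
  assume "free n C \<sigma> \<tau>" then show "pm \<sigma> \<tau> \<in> neural_ideal n C"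
    using free_in_ideal assms by blast
qed

lemma box_sub:
  assumes "okp n \<sigma> \<tau>" "okp n \<sigma>' \<tau>'" "box n \<sigma> \<tau> \<subseteq> box n \<sigma>' \<tau>'"
  shows "\<sigma>' \<subseteq> \<sigma> \<and> \<tau>' \<subseteq> \<tau>"
proof -
  obtain v1 where v1: "v1 \<in> words n" "\<forall>i<n. v1 ! i = (i \<in> \<sigma>)" using word_exists[of n "\<lambda>i. i \<in> \<sigma>"] by blast
  obtain v2 where v2: "v2 \<in> words n" "\<forall>i<n. v2 ! i = (i \<notin> \<tau>)" using word_exists[of n "\<lambda>i. i \<notin> \<tau>"] by blast
  have t: "\<forall>j\<in>\<tau>. j<n" "\<forall>i\<in>\<sigma>. i<n" "\<sigma> \<inter> \<tau> = {}"
      using assms(1) unfolding okp_def by auto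
  have t': "\<forall>j\<in>\<tau>'. j<n" "\<forall>i\<in>\<sigma>'. i<n"
      using assms(2) unfolding okp_def by auto
  have "v1 \<in> box n \<sigma> \<tau>" "v2 \<in> box n \<sigma> \<tau>"
    using t v1 v2 unfolding box_def by auto
  then have "v1 \<in> box n \<sigma>' \<tau>'" "v2 \<in> box n \<sigma>' \<tau>'" using assms(3) by auto
  then show ?thesis using t' v1 v2 unfolding box_def by auto
qed

lemma bit_mult_one: "(a::bit) * b = 1 \<Longrightarrow> a = 1"
  by (cases a) auto

lemma mult_box:
  assumes "okp n \<sigma> \<tau>" "okp n \<sigma>' \<tau>'" "pm \<sigma> \<tau> = pm \<sigma>' \<tau>' * h"
  shows "box n \<sigma> \<tau> \<subseteq> box n \<sigma>' \<tau>'"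
proof
  fix v assume v: "v \<in> box n \<sigma> \<tau>"
  then have "eval (pm \<sigma> \<tau>) v = 1" using okp_finite[OF assms(1)] by (simp add: eval_pm box_def)
  then have "eval (pm \<sigma>' \<tau>') v * eval h v = 1" using assms(3) by (simp add: eval_mult)
  then have "eval (pm \<sigma>' \<tau>') v = 1" by (rule bit_mult_one)
  then show "v \<in> box n \<sigma>' \<tau>'" using v okp_finite[OF assms(2)] by (simp add: eval_pm box_def)
qed

lemma pm_factor: "finite \<sigma> \<Longrightarrow> finite \<tau> \<Longrightarrow> \<sigma>' \<subseteq> \<sigma> \<Longrightarrow> \<tau>' \<subseteq> \<tau> \<Longrightarrow>
   pm \<sigma> \<tau> = pm \<sigma>' \<tau>' * pm (\<sigma> - \<sigma>') (\<tau> - \<tau>')"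
proof -
  assume a: "finite \<sigma>" "finite \<tau>" "\<sigma>' \<subseteq> \<sigma>" "\<tau>' \<subseteq> \<tau>"
  have "prod Var \<sigma> = prod Var (\<sigma> - \<sigma>') * prod Var \<sigma>'" using a by (simp add: prod.subset_diff)
  moreover have "(\<Prod>j\<in>\<tau>. 1 - Var j) = (\<Prod>j\<in>\<tau> - \<tau>'. 1 - Var j) * (\<Prod>j\<in>\<tau>'. 1 - Var j)"
    using a by (simp add: prod.subset_diff)
  ultimately show ?thesis unfolding pm_def by (simp only: mult_ac)
qed

lemma in_ring_pm: "okp n \<sigma> \<tau> \<Longrightarrow> in_ring n (pm \<sigma> \<tau>)"
proof -
  assume o: "okp n \<sigma> \<tau>"
  note fin = okp_finite[OF o]
  have s: "\<forall>i\<in>\<sigma>. i < n" "\<forall>i\<in>\<tau>. i < n" using o unfolding okp_def by auto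
  have "in_ring n (\<Prod>i\<in>\<sigma>. Var i)"
    using fin s by (intro in_ring_prod in_ring_Var) auto
  moreover have "in_ring n (\<Prod>j\<in>\<tau>. 1 - Var j)"
    using fin s by (intro in_ring_prod in_ring_diff in_ring_one in_ring_Var) auto
  ultimately show ?thesis unfolding pm_def by (rule in_ring_mult)
qed

lemma pdvd_pm:
  assumes "okp n \<sigma> \<tau>" "okp n \<sigma>' \<tau>'"
  shows "pdvd n (pm \<sigma>' \<tau>') (pm \<sigma> \<tau>) \<longleftrightarrow> \<sigma>' \<subseteq> \<sigma> \<and> \<tau>' \<subseteq> \<tau>"
proof
  assume "pdvd n (pm \<sigma>' \<tau>') (pm \<sigma> \<tau>)"
  then obtain h where e: "pm \<sigma> \<tau> = pm \<sigma>' \<tau>' * h" unfolding pdvd_def by blast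
  have "box n \<sigma> \<tau> \<subseteq> box n \<sigma>' \<tau>'" by (rule mult_box[OF assms e])
  then show "\<sigma>' \<subseteq> \<sigma> \<and> \<tau>' \<subseteq> \<tau>" by (rule box_sub[OF assms])
next
  assume s: "\<sigma>' \<subseteq> \<sigma> \<and> \<tau>' \<subseteq> \<tau>"
  have o: "okp n (\<sigma> - \<sigma>') (\<tau> - \<tau>')" using assms(1) unfolding okp_def by auto
  note fin = okp_finite[OF assms(1)]
  have e: "pm \<sigma> \<tau> = pm \<sigma>' \<tau>' * pm (\<sigma> - \<sigma>') (\<tau> - \<tau>')"
    using s fin by (intro pm_factor) auto
  show "pdvd n (pm \<sigma>' \<tau>') (pm \<sigma> \<tau>)" unfolding pdvd_def
    by (rule exI[of _ "pm (\<sigma> - \<sigma>') (\<tau> - \<tau>')"]) (use e in_ring_pm[OF o] in simp)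
qed

lemma pm_inj:
  assumes "okp n \<sigma> \<tau>" "okp n \<sigma>' \<tau>'" "pm \<sigma> \<tau> = pm \<sigma>' \<tau>'"
  shows "\<sigma> = \<sigma>' \<and> \<tau> = \<tau>'"
proof -
  have "pdvd n (pm \<sigma>' \<tau>') (pm \<sigma> \<tau>)" unfolding pdvd_def
    by (rule exI[of _ 1]) (simp add: assms(3))
  moreover have "pdvd n (pm \<sigma> \<tau>) (pm \<sigma>' \<tau>')" unfolding pdvd_def
    by (rule exI[of _ 1]) (simp add: assms(3))
  ultimately have "\<sigma>' \<subseteq> \<sigma> \<and> \<tau>' \<subseteq> \<tau>" "\<sigma> \<subseteq> \<sigma>' \<and> \<tau> \<subseteq> \<tau>'"
    using pdvd_pm[OF assms(1,2)] pdvd_pm[OF assms(2,1)] by auto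
  then show ?thesis by auto
qed



definition ex :: "nat set \<Rightarrow> (nat \<Rightarrow>\<^sub>0 nat)" where
  "ex A = (\<Sum>i\<in>A. Poly_Mapping.single i 1)"

definition XX :: "nat set \<Rightarrow> poly" where
  "XX A = Poly_Mapping.single (ex A) 1"

lemma lookup_ex: "finite A \<Longrightarrow> Poly_Mapping.lookup (ex A) i = (if i \<in> A then 1 else 0)"
  unfolding ex_def by (simp add: lookup_sum lookup_single when_def)

lemma keys_ex: "finite A \<Longrightarrow> Poly_Mapping.keys (ex A) = A"
  by (auto simp: in_keys_iff lookup_ex split: if_splits)

lemma deg_ex: "finite A \<Longrightarrow> sum (Poly_Mapping.lookup (ex A)) (Poly_Mapping.keys (ex A)) = card A"
  by (simp add: keys_ex lookup_ex)

lemma ex_inj: "finite A \<Longrightarrow> finite B \<Longrightarrow> ex A = ex B \<Longrightarrow> A = B"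
  by (metis keys_ex)

lemma ex_union: "finite A \<Longrightarrow> finite B \<Longrightarrow> A \<inter> B = {} \<Longrightarrow> ex (A \<union> B) = ex A + ex B"
  unfolding ex_def by (rule sum.union_disjoint)

lemma XX_mult: "finite A \<Longrightarrow> finite B \<Longrightarrow> A \<inter> B = {} \<Longrightarrow> XX A * XX B = XX (A \<union> B)"
  unfolding XX_def by (simp add: mult_single ex_union)

lemma prod_Var: "finite A \<Longrightarrow> prod Var A = XX A"
proof (induction A rule: finite_induct)
  case empty
  then show ?case by (simp add: XX_def ex_def)
next
  case (insert a A)
  have "XX {a} * XX A = XX ({a} \<union> A)" using insert by (intro XX_mult) auto
  moreover have "XX {a} = Var a" by (simp add: XX_def ex_def Var_def)
  ultimately show ?case using insert by simp
qed

lemma prod_one_minus: "finite \<tau> \<Longrightarrow> (\<Prod>j\<in>\<tau>. 1 - Var j) = (\<Sum>S\<in>Pow \<tau>. XX S)"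
proof -
  assume f: "finite \<tau>"
  have "(\<Prod>j\<in>\<tau>. 1 - Var j) = (\<Prod>j\<in>\<tau>. Var j + 1)"
    by (rule prod.cong) (simp_all add: poly_minus add.commute)
  also have "\<dots> = (\<Sum>S\<in>Pow \<tau>. (\<Prod>x\<in>S. Var x) * (\<Prod>x\<in>\<tau>-S. 1))"
    by (rule prod_add[OF f])
  also have "\<dots> = (\<Sum>S\<in>Pow \<tau>. XX S)"
  proof (rule sum.cong)
    fix S assume "S \<in> Pow \<tau>"
    then have "finite S" using f finite_subset by auto
    then show "(\<Prod>x\<in>S. Var x) * (\<Prod>x\<in>\<tau>-S. 1) = XX S" by (simp add: prod_Var)
  qed simp
  finally show ?thesis .
qed

lemma pm_expand: "finite \<sigma> \<Longrightarrow> finite \<tau> \<Longrightarrow> \<sigma> \<inter> \<tau> = {} \<Longrightarrow>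
   pm \<sigma> \<tau> = (\<Sum>S\<in>Pow \<tau>. XX (\<sigma> \<union> S))"
proof -
  assume a: "finite \<sigma>" "finite \<tau>" "\<sigma> \<inter> \<tau> = {}"
  have "pm \<sigma> \<tau> = XX \<sigma> * (\<Sum>S\<in>Pow \<tau>. XX S)"
    unfolding pm_def using a by (simp add: prod_Var prod_one_minus)
  also have "\<dots> = (\<Sum>S\<in>Pow \<tau>. XX \<sigma> * XX S)" by (rule sum_distrib_left)
  also have "\<dots> = (\<Sum>S\<in>Pow \<tau>. XX (\<sigma> \<union> S))"
  proof (rule sum.cong)
    fix S assume "S \<in> Pow \<tau>"
    then have "finite S" "\<sigma> \<inter> S = {}" using a finite_subset by auto
    then show "XX \<sigma> * XX S = XX (\<sigma> \<union> S)" using a by (intro XX_mult) auto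
  qed simp
  finally show ?thesis .
qed

lemma union_inj:
  assumes "\<sigma> \<inter> \<tau> = {}" "S \<subseteq> \<tau>" "S' \<subseteq> \<tau>" "\<sigma> \<union> S = \<sigma> \<union> S'"
  shows "S = S'"
  using assms by blast

lemma lookup_pm:
  assumes a: "finite \<sigma>" "finite \<tau>" "\<sigma> \<inter> \<tau> = {}"
  shows "Poly_Mapping.lookup (pm \<sigma> \<tau>) m = (if m \<in> (\<lambda>S. ex (\<sigma> \<union> S)) ` Pow \<tau> then 1 else 0)"
proof -
  have "Poly_Mapping.lookup (pm \<sigma> \<tau>) m = (\<Sum>S\<in>Pow \<tau>. (if ex (\<sigma> \<union> S) = m then 1 else 0))"
    unfolding pm_expand[OF a] by (simp add: lookup_sum XX_def lookup_single when_def)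
  also have "\<dots> = (if m \<in> (\<lambda>S. ex (\<sigma> \<union> S)) ` Pow \<tau> then 1 else 0)"
  proof (cases "m \<in> (\<lambda>S. ex (\<sigma> \<union> S)) ` Pow \<tau>")
    case True
    then obtain S0 where S0: "S0 \<subseteq> \<tau>" "m = ex (\<sigma> \<union> S0)" by blast
    have "(\<Sum>S\<in>Pow \<tau>. (if ex (\<sigma> \<union> S) = m then 1 else 0)) = (\<Sum>S\<in>Pow \<tau>. (if S = S0 then 1 else (0::bit)))"
    proof (rule sum.cong)
      fix S assume S: "S \<in> Pow \<tau>"
      have fS: "finite (\<sigma> \<union> S)" "finite (\<sigma> \<union> S0)" using S S0 a finite_subset by auto
      have "ex (\<sigma> \<union> S) = m \<longleftrightarrow> S = S0"
      proof
        assume "ex (\<sigma> \<union> S) = m"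
        then have "\<sigma> \<union> S = \<sigma> \<union> S0" using ex_inj[OF fS] S0(2) by simp
        then show "S = S0" using union_inj[OF a(3)] S S0(1) by blast
      qed (use S0 in simp)
      then show "(if ex (\<sigma> \<union> S) = m then 1 else 0) = (if S = S0 then 1 else (0::bit))" by simp
    qed simp
    also have "\<dots> = 1" using S0 a(2) by simp
    finally show ?thesis using True by simp
  next
    case False
    have "(\<Sum>S\<in>Pow \<tau>. if ex (\<sigma> \<union> S) = m then 1 else (0::bit)) = 0"
      by (rule sum.neutral) (use False in auto)
    then show ?thesis using False by simp
  qed
  finally show ?thesis .
qed

lemma keys_pm:
  assumes "finite \<sigma>" "finite \<tau>" "\<sigma> \<inter> \<tau> = {}"
  shows "Poly_Mapping.keys (pm \<sigma> \<tau>) = (\<lambda>S. ex (\<sigma> \<union> S)) ` Pow \<tau>"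
  by (auto simp: in_keys_iff lookup_pm[OF assms] split: if_splits)

lemma total_degree_pm:
  assumes a: "finite \<sigma>" "finite \<tau>" "\<sigma> \<inter> \<tau> = {}"
  shows "total_degree (pm \<sigma> \<tau>) = card \<sigma> + card \<tau>"
proof -
  let ?d = "\<lambda>m::nat\<Rightarrow>\<^sub>0nat. sum (Poly_Mapping.lookup m) (Poly_Mapping.keys m)"
  have img: "?d ` Poly_Mapping.keys (pm \<sigma> \<tau>) = (\<lambda>S. card \<sigma> + card S) ` Pow \<tau>"
  proof -
    have "?d ` Poly_Mapping.keys (pm \<sigma> \<tau>) = (\<lambda>S. ?d (ex (\<sigma> \<union> S))) ` Pow \<tau>"
      unfolding keys_pm[OF a] by (simp add: image_image)
    also have "\<dots> = (\<lambda>S. card \<sigma> + card S) ` Pow \<tau>"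
    proof (rule image_cong)
      fix S assume S: "S \<in> Pow \<tau>"
      then have "finite S" "\<sigma> \<inter> S = {}" using a finite_subset by auto
      then show "?d (ex (\<sigma> \<union> S)) = card \<sigma> + card S"
        using a by (simp add: deg_ex card_Un_disjoint)
    qed simp
    finally show ?thesis .
  qed
  have "Max (insert 0 ((\<lambda>S. card \<sigma> + card S) ` Pow \<tau>)) = card \<sigma> + card \<tau>"
  proof (rule Max_eqI)
    show "finite (insert 0 ((\<lambda>S. card \<sigma> + card S) ` Pow \<tau>))" using a by simp
  next
    fix y assume "y \<in> insert 0 ((\<lambda>S. card \<sigma> + card S) ` Pow \<tau>)"
    then show "y \<le> card \<sigma> + card \<tau>" using a(2) by (auto intro: card_mono)
  next
    show "card \<sigma> + card \<tau> \<in> insert 0 ((\<lambda>S. card \<sigma> + card S) ` Pow \<tau>)" by blast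
  qed
  then show ?thesis unfolding total_degree_def img .
qed



definition mini :: "nat \<Rightarrow> bool list set \<Rightarrow> nat set \<Rightarrow> nat set \<Rightarrow> bool" where
  "mini n C \<sigma> \<tau> \<longleftrightarrow> okp n \<sigma> \<tau> \<and> free n C \<sigma> \<tau> \<and>
     (\<forall>\<sigma>' \<tau>'. okp n \<sigma>' \<tau>' \<longrightarrow> \<sigma>' \<subseteq> \<sigma> \<longrightarrow> \<tau>' \<subseteq> \<tau> \<longrightarrow> free n C \<sigma>' \<tau>' \<longrightarrow> \<sigma>' = \<sigma> \<and> \<tau>' = \<tau>)"

lemma okp_sub: "okp n \<sigma> \<tau> \<Longrightarrow> \<sigma>' \<subseteq> \<sigma> \<Longrightarrow> \<tau>' \<subseteq> \<tau> \<Longrightarrow> okp n \<sigma>' \<tau>'"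
  unfolding okp_def by blast

lemma deg_pm: "okp n \<sigma> \<tau> \<Longrightarrow> total_degree (pm \<sigma> \<tau>) = card \<sigma> + card \<tau>"
  using okp_finite[of n \<sigma> \<tau>] by (intro total_degree_pm) (auto simp: okp_def)

lemma card_sum_less:
  assumes "finite \<sigma>" "finite \<tau>" "\<sigma>' \<subseteq> \<sigma>" "\<tau>' \<subseteq> \<tau>" "\<not> (\<sigma>' = \<sigma> \<and> \<tau>' = \<tau>)"
  shows "card \<sigma>' + card \<tau>' < card \<sigma> + card \<tau>"
proof (cases "\<sigma>' = \<sigma>")
  case True
  then have "\<tau>' \<subset> \<tau>" using assms by auto
  then have "card \<tau>' < card \<tau>" using assms(2) by (rule psubset_card_mono[rotated])
  then show ?thesis using True by simp
next
  case False
  then have "\<sigma>' \<subset> \<sigma>" using assms by auto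
  then have "card \<sigma>' < card \<sigma>" using assms(1) by (rule psubset_card_mono[rotated])
  moreover have "card \<tau>' \<le> card \<tau>" using assms(2,4) by (rule card_mono)
  ultimately show ?thesis by simp
qed

lemma CF_char:
  assumes "C \<subseteq> words n"
  shows "f \<in> CF n (neural_ideal n C) \<longleftrightarrow> (\<exists>\<sigma> \<tau>. f = pm \<sigma> \<tau> \<and> mini n C \<sigma> \<tau>)"
proof
  assume "f \<in> CF n (neural_ideal n C)"
  then have m: "minimal_pm n (neural_ideal n C) f" by (simp add: CF_def)
  then obtain \<sigma> \<tau> where o: "okp n \<sigma> \<tau>" and f: "f = pm \<sigma> \<tau>"
    unfolding minimal_pm_def pseudo_monomial_pm by blast
  have fr: "free n C \<sigma> \<tau>" using m f pm_in_ideal_iff[OF o assms] unfolding minimal_pm_def by simp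
  have "\<sigma>' = \<sigma> \<and> \<tau>' = \<tau>" if o': "okp n \<sigma>' \<tau>'" and s: "\<sigma>' \<subseteq> \<sigma>" "\<tau>' \<subseteq> \<tau>" and fr': "free n C \<sigma>' \<tau>'" for \<sigma>' \<tau>'
  proof (rule ccontr)
    assume ne: "\<not> (\<sigma>' = \<sigma> \<and> \<tau>' = \<tau>)"
    note fin = okp_finite[OF o]
    have pg: "pseudo_monomial n (pm \<sigma>' \<tau>')" using o' pseudo_monomial_pm by blast
    have gJ: "pm \<sigma>' \<tau>' \<in> neural_ideal n C" using pm_in_ideal_iff[OF o' assms] fr' by simp
    have o2: "okp n (\<sigma> - \<sigma>') (\<tau> - \<tau>')" using o unfolding okp_def by auto
    have hr: "in_ring n (pm (\<sigma> - \<sigma>') (\<tau> - \<tau>'))" by (rule in_ring_pm[OF o2])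
    have fe: "f = pm \<sigma>' \<tau>' * pm (\<sigma> - \<sigma>') (\<tau> - \<tau>')" unfolding f
      using fin s by (intro pm_factor) auto
    have "total_degree (pm \<sigma>' \<tau>') < total_degree f"
      unfolding f deg_pm[OF o] deg_pm[OF o'] using fin s ne by (intro card_sum_less) auto
    then have "\<exists>g h. pseudo_monomial n g \<and> g \<in> neural_ideal n C \<and> in_ring n h \<and>
            total_degree g < total_degree f \<and> f = g * h"
      using pg gJ hr fe by blast
    then show False using m unfolding minimal_pm_def by simp
  qed
  then have "mini n C \<sigma> \<tau>" unfolding mini_def using o fr by blast
  then show "\<exists>\<sigma> \<tau>. f = pm \<sigma> \<tau> \<and> mini n C \<sigma> \<tau>" using f by blast
next
  assume "\<exists>\<sigma> \<tau>. f = pm \<sigma> \<tau> \<and> mini n C \<sigma> \<tau>"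
  then obtain \<sigma> \<tau> where f: "f = pm \<sigma> \<tau>" and mi: "mini n C \<sigma> \<tau>" by blast
  have o: "okp n \<sigma> \<tau>" and fr: "free n C \<sigma> \<tau>" using mi unfolding mini_def by auto
  have pf: "pseudo_monomial n f" using o f pseudo_monomial_pm by blast
  have fJ: "f \<in> neural_ideal n C" using pm_in_ideal_iff[OF o assms] fr f by simp
  have nex: "\<not> (\<exists>g h. pseudo_monomial n g \<and> g \<in> neural_ideal n C \<and> in_ring n h \<and>
            total_degree g < total_degree f \<and> f = g * h)"
  proof
    assume "\<exists>g h. pseudo_monomial n g \<and> g \<in> neural_ideal n C \<and> in_ring n h \<and>
            total_degree g < total_degree f \<and> f = g * h"
    then obtain g h where g: "pseudo_monomial n g" "g \<in> neural_ideal n C" "in_ring n h"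
            "total_degree g < total_degree f" "f = g * h" by blast
    obtain \<sigma>' \<tau>' where o': "okp n \<sigma>' \<tau>'" and ge: "g = pm \<sigma>' \<tau>'"
      using g(1) pseudo_monomial_pm by blast
    have fr': "free n C \<sigma>' \<tau>'" using pm_in_ideal_iff[OF o' assms] g(2) ge by simp
    have "pdvd n (pm \<sigma>' \<tau>') (pm \<sigma> \<tau>)" unfolding pdvd_def
      by (rule exI[of _ h]) (use g(3,5) f ge in simp)
    then have s: "\<sigma>' \<subseteq> \<sigma>" "\<tau>' \<subseteq> \<tau>" using pdvd_pm[OF o o'] by auto
    have "\<sigma>' = \<sigma> \<and> \<tau>' = \<tau>" using mi o' s fr' unfolding mini_def by blast
    then show False using g(4) ge f by simp
  qed
  show "f \<in> CF n (neural_ideal n C)"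
    unfolding CF_def mem_Collect_eq minimal_pm_def using pf fJ nex by blast
qed

lemma exists_min:
  assumes "okp n \<sigma> \<tau>" "free n C \<sigma> \<tau>"
  shows "\<exists>\<sigma>0 \<tau>0. \<sigma>0 \<subseteq> \<sigma> \<and> \<tau>0 \<subseteq> \<tau> \<and> mini n C \<sigma>0 \<tau>0"
  using assms
proof (induction "card \<sigma> + card \<tau>" arbitrary: \<sigma> \<tau> rule: less_induct)
  case less
  show ?case
  proof (cases "mini n C \<sigma> \<tau>")
    case True
    then show ?thesis by blast
  next
    case False
    then obtain \<sigma>' \<tau>' where o': "okp n \<sigma>' \<tau>'" and s: "\<sigma>' \<subseteq> \<sigma>" "\<tau>' \<subseteq> \<tau>"
      and fr': "free n C \<sigma>' \<tau>'" and ne: "\<not> (\<sigma>' = \<sigma> \<and> \<tau>' = \<tau>)"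
      using less.prems unfolding mini_def by blast
    have "card \<sigma>' + card \<tau>' < card \<sigma> + card \<tau>"
      using okp_finite[OF less.prems(1)] s ne by (intro card_sum_less) auto
    from less.hyps[OF this o' fr'] obtain \<sigma>0 \<tau>0 where "\<sigma>0 \<subseteq> \<sigma>'" "\<tau>0 \<subseteq> \<tau>'" "mini n C \<sigma>0 \<tau>0"
      by blast
    then show ?thesis using s by (meson order_trans)
  qed
qed



definition addc :: "bool list \<Rightarrow> nat \<Rightarrow> nat set \<Rightarrow> nat set" where
  "addc c i \<sigma> = (if c ! i then \<sigma> else insert i \<sigma>)"
definition addt :: "bool list \<Rightarrow> nat \<Rightarrow> nat set \<Rightarrow> nat set" where
  "addt c i \<tau> = (if c ! i then insert i \<tau> else \<tau>)"

lemma free_ins: "free n (C' \<union> {c}) \<sigma> \<tau> \<longleftrightarrow> free n C' \<sigma> \<tau> \<and> c \<notin> box n \<sigma> \<tau>"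
  unfolding free_def by blast

lemma box_mono: "\<sigma>' \<subseteq> \<sigma> \<Longrightarrow> \<tau>' \<subseteq> \<tau> \<Longrightarrow> box n \<sigma> \<tau> \<subseteq> box n \<sigma>' \<tau>'"
  unfolding box_def by blast

lemma free_mono: "free n C \<sigma>' \<tau>' \<Longrightarrow> \<sigma>' \<subseteq> \<sigma> \<Longrightarrow> \<tau>' \<subseteq> \<tau> \<Longrightarrow> free n C \<sigma> \<tau>"
  unfolding free_def using box_mono by blast

lemma eval_pm_c: "okp n \<sigma> \<tau> \<Longrightarrow> c \<in> words n \<Longrightarrow> eval (pm \<sigma> \<tau>) c = of_bool (c \<in> box n \<sigma> \<tau>)"
  using okp_finite[of n \<sigma> \<tau>] by (simp add: eval_pm box_def)

lemma lin_eq: "lin i b = (if b then pm {} {i} else pm {i} {})"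
  by (cases b) (simp_all add: lin_def pm_def poly_minus add.commute)

lemma lin_m1: "lin i b - 1 = (if b then pm {i} {} else pm {} {i})"
proof (cases b)
  case True
  have "Var i - 1 - 1 = Var i + (1 + 1)" by (simp only: poly_minus add.assoc)
  also have "\<dots> = Var i" by (simp only: poly_add_self add_0_right)
  finally show ?thesis using True by (simp add: lin_def pm_def)
next
  case False
  then show ?thesis by (simp add: lin_def pm_def poly_minus add.commute)
qed

lemma mult_lin:
  assumes "finite \<sigma>" "finite \<tau>" "i \<notin> \<sigma>" "i \<notin> \<tau>"
  shows "pm \<sigma> \<tau> * lin i (c ! i) = pm (addc c i \<sigma>) (addt c i \<tau>)"
proof (cases "c ! i")
  case True
  have "pm \<sigma> (insert i \<tau>) = pm \<sigma> \<tau> * pm (\<sigma> - \<sigma>) (insert i \<tau> - \<tau>)"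
    using assms by (intro pm_factor) auto
  moreover have "insert i \<tau> - \<tau> = {i}" using assms by auto
  ultimately show ?thesis using True by (simp add: lin_eq addc_def addt_def)
next
  case False
  have "pm (insert i \<sigma>) \<tau> = pm \<sigma> \<tau> * pm (insert i \<sigma> - \<sigma>) (\<tau> - \<tau>)"
    using assms by (intro pm_factor) auto
  moreover have "insert i \<sigma> - \<sigma> = {i}" using assms by auto
  ultimately show ?thesis using False by (simp add: lin_eq addc_def addt_def)
qed

lemma K_a: "c \<in> words n \<Longrightarrow> i < n \<Longrightarrow> c \<notin> box n (addc c i \<sigma>) (addt c i \<tau>)"
  by (auto simp: addc_def addt_def box_def)

lemma K_b: "\<sigma>' \<subseteq> addc c i \<sigma>0 \<Longrightarrow> \<tau>' \<subseteq> addt c i \<tau>0 \<Longrightarrow> c \<in> box n \<sigma>' \<tau>' \<Longrightarrow> \<sigma>' \<subseteq> \<sigma>0 \<and> \<tau>' \<subseteq> \<tau>0"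
  by (auto simp: addc_def addt_def box_def split: if_splits)

lemma K_c:
  assumes "\<sigma>0 \<subseteq> \<sigma>'" "\<tau>0 \<subseteq> \<tau>'" "\<sigma>' \<subseteq> addc c i \<sigma>0" "\<tau>' \<subseteq> addt c i \<tau>0"
    "c \<notin> box n \<sigma>' \<tau>'" "c \<in> box n \<sigma>0 \<tau>0"
  shows "\<sigma>' = addc c i \<sigma>0 \<and> \<tau>' = addt c i \<tau>0"
proof -
  have cw: "c \<in> words n" using assms(6) by (simp add: box_def)
  from assms(5) cw obtain k where k: "(k \<in> \<sigma>' \<and> \<not> c ! k) \<or> (k \<in> \<tau>' \<and> c ! k)"
    unfolding box_def by blast
  show ?thesis
  proof (cases "c ! i")
    case True
    then have "\<sigma>' = \<sigma>0" "\<tau>' \<subseteq> insert i \<tau>0" using assms(1,3,4) by (auto simp: addc_def addt_def)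
    then have "k \<in> \<tau>'" "c ! k" using k assms(6) unfolding box_def by auto
    then have "k = i" using \<open>\<tau>' \<subseteq> insert i \<tau>0\<close> assms(6) unfolding box_def by auto
    then show ?thesis using True \<open>\<sigma>' = \<sigma>0\<close> \<open>\<tau>' \<subseteq> insert i \<tau>0\<close> \<open>k \<in> \<tau>'\<close> assms(2)
      by (auto simp: addc_def addt_def)
  next
    case False
    then have "\<tau>' = \<tau>0" "\<sigma>' \<subseteq> insert i \<sigma>0" using assms(2,3,4) by (auto simp: addc_def addt_def)
    then have "k \<in> \<sigma>'" "\<not> c ! k" using k assms(6) unfolding box_def by auto
    then have "k = i" using \<open>\<sigma>' \<subseteq> insert i \<sigma>0\<close> assms(6) unfolding box_def by auto
    then show ?thesis using False \<open>\<tau>' = \<tau>0\<close> \<open>\<sigma>' \<subseteq> insert i \<sigma>0\<close> \<open>k \<in> \<sigma>'\<close> assms(1)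
      by (auto simp: addc_def addt_def)
  qed
qed

lemma K_d:
  assumes "okp n \<sigma> \<tau>" "\<sigma>0 \<subseteq> \<sigma>" "\<tau>0 \<subseteq> \<tau>" "c \<in> box n \<sigma>0 \<tau>0" "c \<notin> box n \<sigma> \<tau>"
  shows "\<exists>i<n. i \<notin> \<sigma>0 \<and> i \<notin> \<tau>0 \<and> addc c i \<sigma>0 \<subseteq> \<sigma> \<and> addt c i \<tau>0 \<subseteq> \<tau>"
proof -
  have cw: "c \<in> words n" using assms(4) by (simp add: box_def)
  from assms(5) cw obtain k where k: "(k \<in> \<sigma> \<and> \<not> c ! k) \<or> (k \<in> \<tau> \<and> c ! k)"
    unfolding box_def by blast
  have kn: "k < n" using k assms(1) unfolding okp_def by auto
  have "k \<notin> \<sigma>0 \<and> k \<notin> \<tau>0 \<and> addc c k \<sigma>0 \<subseteq> \<sigma> \<and> addt c k \<tau>0 \<subseteq> \<tau>"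
    using k assms(1-4) unfolding okp_def box_def addc_def addt_def by auto
  then show ?thesis using kn by blast
qed

lemma K_e: "okp n \<sigma>0 \<tau>0 \<Longrightarrow> i < n \<Longrightarrow> i \<notin> \<sigma>0 \<Longrightarrow> i \<notin> \<tau>0 \<Longrightarrow> okp n (addc c i \<sigma>0) (addt c i \<tau>0)"
  unfolding okp_def addc_def addt_def by auto

lemma K_f: "\<sigma>0 \<subseteq> addc c i \<sigma>0" "\<tau>0 \<subseteq> addt c i \<tau>0"
  unfolding addc_def addt_def by auto




lemma mini_parts: "mini n C \<sigma> \<tau> \<Longrightarrow> okp n \<sigma> \<tau> \<and> free n C \<sigma> \<tau>"
  unfolding mini_def by (elim conjE) (rule conjI)

lemma mini_min: "mini n C \<sigma> \<tau> \<Longrightarrow> okp n \<sigma>' \<tau>' \<Longrightarrow> \<sigma>' \<subseteq> \<sigma> \<Longrightarrow> \<tau>' \<subseteq> \<tau> \<Longrightarrow>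
      free n C \<sigma>' \<tau>' \<Longrightarrow> \<sigma>' = \<sigma> \<and> \<tau>' = \<tau>"
  unfolding mini_def by (elim conjE allE impE) simp_all

lemma mini_intro: "okp n \<sigma> \<tau> \<Longrightarrow> free n C \<sigma> \<tau> \<Longrightarrow>
      (\<And>\<sigma>' \<tau>'. okp n \<sigma>' \<tau>' \<Longrightarrow> \<sigma>' \<subseteq> \<sigma> \<Longrightarrow> \<tau>' \<subseteq> \<tau> \<Longrightarrow> free n C \<sigma>' \<tau>' \<Longrightarrow> \<sigma>' = \<sigma> \<and> \<tau>' = \<tau>)
      \<Longrightarrow> mini n C \<sigma> \<tau>"
  unfolding mini_def by blast

lemma evc: "mini n C \<sigma> \<tau> \<Longrightarrow> c \<in> words n \<Longrightarrow> eval (pm \<sigma> \<tau>) c = of_bool (c \<in> box n \<sigma> \<tau>)"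
  using mini_parts eval_pm_c by blast



theorem proposition2:
  fixes n :: nat and C' :: "bool list set" and c :: "bool list"
  assumes "C' \<subseteq> words n" and "c \<in> words n"
  shows "CF n (neural_ideal n (C' \<union> {c})) =
    {f \<in> CF n (neural_ideal n C'). eval f c = 0} \<union>
    {g. \<exists>f \<in> CF n (neural_ideal n C') - {f \<in> CF n (neural_ideal n C'). eval f c = 0}.
          \<exists>i < n. g = f * lin i (c ! i) \<and>
            \<not> pdvd n (lin i (c ! i) - 1) f \<and>
            \<not> (\<exists>m \<in> {f \<in> CF n (neural_ideal n C'). eval f c = 0}. pdvd n m g)}"
proof -
  let ?C2 = "C' \<union> {c}"
  let ?CF1 = "CF n (neural_ideal n C')"
  let ?M = "{f \<in> ?CF1. eval f c = 0}"
  have C2w: "?C2 \<subseteq> words n" using assms by auto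
  have cw: "c \<in> words n" by (rule assms(2))
  have CF1: "\<And>f. f \<in> ?CF1 \<longleftrightarrow> (\<exists>\<sigma> \<tau>. f = pm \<sigma> \<tau> \<and> mini n C' \<sigma> \<tau>)"
    by (rule CF_char[OF assms(1)])
  have CF2: "\<And>f. f \<in> CF n (neural_ideal n ?C2) \<longleftrightarrow> (\<exists>\<sigma> \<tau>. f = pm \<sigma> \<tau> \<and> mini n ?C2 \<sigma> \<tau>)"
    by (rule CF_char[OF C2w])
  have evc: "\<And>C \<sigma> \<tau>. mini n C \<sigma> \<tau> \<Longrightarrow> eval (pm \<sigma> \<tau>) c = of_bool (c \<in> box n \<sigma> \<tau>)"
    using evc cw by blast
  show ?thesis
  proof (rule set_eqI, rule iffI)
    fix g assume "g \<in> CF n (neural_ideal n ?C2)"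
    then obtain \<sigma> \<tau> where g: "g = pm \<sigma> \<tau>" and mi: "mini n ?C2 \<sigma> \<tau>" using CF2 by blast
    have o: "okp n \<sigma> \<tau>" and fr2: "free n ?C2 \<sigma> \<tau>" using mini_parts[OF mi] by auto
    have fr1: "free n C' \<sigma> \<tau>" and cnb: "c \<notin> box n \<sigma> \<tau>" using fr2 free_ins by auto
    show "g \<in> ?M \<union> {g. \<exists>f \<in> ?CF1 - ?M. \<exists>i < n. g = f * lin i (c ! i) \<and>
            \<not> pdvd n (lin i (c ! i) - 1) f \<and> \<not> (\<exists>m \<in> ?M. pdvd n m g)}"
    proof (cases "mini n C' \<sigma> \<tau>")
      case True
      have "g \<in> ?CF1" using CF1 g True by blast
      moreover have "eval g c = 0" using g evc[OF True] cnb by simp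
      ultimately show ?thesis by blast
    next
      case False
      obtain \<sigma>0 \<tau>0 where s0: "\<sigma>0 \<subseteq> \<sigma>" "\<tau>0 \<subseteq> \<tau>" and mi0: "mini n C' \<sigma>0 \<tau>0"
        using exists_min[OF o fr1] by blast
      have ne: "\<not> (\<sigma>0 = \<sigma> \<and> \<tau>0 = \<tau>)" using False mi0 by auto
      have o0: "okp n \<sigma>0 \<tau>0" and fr0: "free n C' \<sigma>0 \<tau>0" using mini_parts[OF mi0] by auto
      have cb0: "c \<in> box n \<sigma>0 \<tau>0"
      proof (rule ccontr)
        assume "c \<notin> box n \<sigma>0 \<tau>0"
        then have "free n ?C2 \<sigma>0 \<tau>0" using fr0 free_ins by blast
        then show False using mini_min[OF mi o0 s0] ne by blast
      qed
      obtain i where i: "i < n" "i \<notin> \<sigma>0" "i \<notin> \<tau>0" "addc c i \<sigma>0 \<subseteq> \<sigma>" "addt c i \<tau>0 \<subseteq> \<tau>"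
        using K_d[OF o s0 cb0 cnb] by blast
      have o1: "okp n (addc c i \<sigma>0) (addt c i \<tau>0)" using K_e[OF o0 i(1-3)] .
      have "free n C' (addc c i \<sigma>0) (addt c i \<tau>0)" using free_mono[OF fr0 K_f] .
      then have "free n ?C2 (addc c i \<sigma>0) (addt c i \<tau>0)" using free_ins K_a[OF cw i(1)] by blast
      then have eq: "addc c i \<sigma>0 = \<sigma> \<and> addt c i \<tau>0 = \<tau>" using mini_min[OF mi o1 i(4,5)] by blast
      note fin0 = okp_finite[OF o0]
      have gf: "g = pm \<sigma>0 \<tau>0 * lin i (c ! i)"
        using g eq mult_lin[of \<sigma>0 \<tau>0 i c] fin0 i(2,3) by simp
      have f1: "pm \<sigma>0 \<tau>0 \<in> ?CF1" using CF1 mi0 by blast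
      have f1e: "pm \<sigma>0 \<tau>0 \<notin> ?M" using evc[OF mi0] cb0 by simp
      have oi: "okp n {i} {}" "okp n {} {i}" using i(1) unfolding okp_def by auto
      have npd: "\<not> pdvd n (lin i (c ! i) - 1) (pm \<sigma>0 \<tau>0)"
        unfolding lin_m1 using pdvd_pm[OF o0 oi(1)] pdvd_pm[OF o0 oi(2)] i(2,3) by auto
      have nm: "\<not> (\<exists>m \<in> ?M. pdvd n m g)"
      proof
        assume "\<exists>m \<in> ?M. pdvd n m g"
        then obtain m where m: "m \<in> ?CF1" "eval m c = 0" "pdvd n m g" by blast
        obtain \<sigma>m \<tau>m where me: "m = pm \<sigma>m \<tau>m" and mim: "mini n C' \<sigma>m \<tau>m" using m(1) CF1 by blast
        have om: "okp n \<sigma>m \<tau>m" and frm: "free n C' \<sigma>m \<tau>m" using mini_parts[OF mim] by auto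
        have "c \<notin> box n \<sigma>m \<tau>m" using evc[OF mim] m(2) me by simp
        then have frm2: "free n ?C2 \<sigma>m \<tau>m" using frm free_ins by blast
        have "\<sigma>m \<subseteq> \<sigma> \<and> \<tau>m \<subseteq> \<tau>" using pdvd_pm[OF o om] m(3) me g by simp
        then have "\<sigma>m = \<sigma> \<and> \<tau>m = \<tau>" using mini_min[OF mi om] frm2 by blast
        then show False using mim False by simp
      qed
      have "g \<in> {g. \<exists>f \<in> ?CF1 - ?M. \<exists>i < n. g = f * lin i (c ! i) \<and>
            \<not> pdvd n (lin i (c ! i) - 1) f \<and> \<not> (\<exists>m \<in> ?M. pdvd n m g)}"
        using f1 f1e i(1) gf npd nm by blast
      then show ?thesis by (rule UnI2)
    qed
  next
    fix g assume g: "g \<in> ?M \<union> {g. \<exists>f \<in> ?CF1 - ?M. \<exists>i < n. g = f * lin i (c ! i) \<and>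
            \<not> pdvd n (lin i (c ! i) - 1) f \<and> \<not> (\<exists>m \<in> ?M. pdvd n m g)}"
    show "g \<in> CF n (neural_ideal n ?C2)"
    proof (cases "g \<in> ?M")
      case True
      then have gC: "g \<in> ?CF1" and ge: "eval g c = 0" by auto
      obtain \<sigma> \<tau> where gp: "g = pm \<sigma> \<tau>" and mi: "mini n C' \<sigma> \<tau>" using gC CF1 by blast
      have o: "okp n \<sigma> \<tau>" and fr: "free n C' \<sigma> \<tau>" using mini_parts[OF mi] by auto
      have cnb: "c \<notin> box n \<sigma> \<tau>" using evc[OF mi] ge gp by simp
      have "mini n ?C2 \<sigma> \<tau>"
      proof (rule mini_intro[OF o])
        show "free n ?C2 \<sigma> \<tau>" using fr cnb free_ins by blast
      next
        fix \<sigma>' \<tau>' assume "okp n \<sigma>' \<tau>'" "\<sigma>' \<subseteq> \<sigma>" "\<tau>' \<subseteq> \<tau>" "free n ?C2 \<sigma>' \<tau>'"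
        then show "\<sigma>' = \<sigma> \<and> \<tau>' = \<tau>" using mini_min[OF mi] free_ins by blast
      qed
      then show ?thesis using CF2 gp by blast
    next
      case False
      then obtain f i where f: "f \<in> ?CF1" "f \<notin> ?M" and i: "i < n" and gf: "g = f * lin i (c ! i)"
        and npd: "\<not> pdvd n (lin i (c ! i) - 1) f" and nm: "\<not> (\<exists>m \<in> ?M. pdvd n m g)"
        using g by blast
      obtain \<sigma>0 \<tau>0 where fp: "f = pm \<sigma>0 \<tau>0" and mi0: "mini n C' \<sigma>0 \<tau>0" using f(1) CF1 by blast
      have o0: "okp n \<sigma>0 \<tau>0" and fr0: "free n C' \<sigma>0 \<tau>0" using mini_parts[OF mi0] by auto
      note fin0 = okp_finite[OF o0]
      have cb0: "c \<in> box n \<sigma>0 \<tau>0" using evc[OF mi0] f fp by auto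
      have oi: "okp n {i} {}" "okp n {} {i}" using i unfolding okp_def by auto
      have ni: "i \<notin> \<sigma>0" "i \<notin> \<tau>0"
        using npd cb0 unfolding lin_m1 fp
        using pdvd_pm[OF o0 oi(1)] pdvd_pm[OF o0 oi(2)] by (auto simp: box_def split: if_splits)
      let ?s = "addc c i \<sigma>0" and ?t = "addt c i \<tau>0"
      have gp: "g = pm ?s ?t" using gf fp mult_lin[of \<sigma>0 \<tau>0 i c] fin0 ni by simp
      have o: "okp n ?s ?t" using K_e[OF o0 i ni] .
      have fr1: "free n C' ?s ?t" using free_mono[OF fr0 K_f] .
      have cnb: "c \<notin> box n ?s ?t" using K_a[OF cw i] .
      have "mini n ?C2 ?s ?t"
      proof (rule mini_intro[OF o])
        show "free n ?C2 ?s ?t" using fr1 cnb free_ins by blast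
      next
        fix \<sigma>' \<tau>' assume o': "okp n \<sigma>' \<tau>'" and s': "\<sigma>' \<subseteq> ?s" "\<tau>' \<subseteq> ?t" and fr': "free n ?C2 \<sigma>' \<tau>'"
        have fr1': "free n C' \<sigma>' \<tau>'" and cnb': "c \<notin> box n \<sigma>' \<tau>'" using fr' free_ins by auto
        obtain \<sigma>m \<tau>m where sm: "\<sigma>m \<subseteq> \<sigma>'" "\<tau>m \<subseteq> \<tau>'" and mim: "mini n C' \<sigma>m \<tau>m"
          using exists_min[OF o' fr1'] by blast
        have om: "okp n \<sigma>m \<tau>m" and frm: "free n C' \<sigma>m \<tau>m" using mini_parts[OF mim] by auto
        have cbm: "c \<in> box n \<sigma>m \<tau>m"
        proof (rule ccontr)
          assume a: "c \<notin> box n \<sigma>m \<tau>m"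
          have "pm \<sigma>m \<tau>m \<in> ?M" using CF1 mim evc[OF mim] a by auto
          moreover have "pdvd n (pm \<sigma>m \<tau>m) g" unfolding gp
            using pdvd_pm[OF o om] sm s' by blast
          ultimately show False using nm by blast
        qed
        have "\<sigma>m \<subseteq> ?s" "\<tau>m \<subseteq> ?t" using sm s' by auto
        then have "\<sigma>m \<subseteq> \<sigma>0 \<and> \<tau>m \<subseteq> \<tau>0" using K_b cbm by blast
        then have "\<sigma>m = \<sigma>0 \<and> \<tau>m = \<tau>0" using mini_min[OF mi0 om] frm by blast
        then have "\<sigma>0 \<subseteq> \<sigma>' \<and> \<tau>0 \<subseteq> \<tau>'" using sm by auto
        then show "\<sigma>' = ?s \<and> \<tau>' = ?t" using K_c s' cnb' cb0 by blast
      qed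
      then show ?thesis using CF2 gp by blast
    qed
  qed
qed


end
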